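(* For a dataset $V$ of size $n$, any real $p\in(0,+\infty)$ and any dimension $d\ge1$, the VC dimension of contrastive learning (on triplet queries) for the $\ell_p$-distance class in dimension $d$ is $\Omega(\min(n^2,nd))$.
   Context: $V$ is a finite set with $|V|=n$. A query is a triple $(x,y,z)$ of elements of $V$; a labeling assigns it either $(x,y^+,z^-)$ (requiring $\rho(x,y)<\rho(x,z)$) or $(x,z^+,y^-)$ (requiring $\rho(x,y)>\rho(x,z)$). The $\ell_p$-distance class in dimension $d$ consists of all $\rho(x,y)=\|f(x)-f(y)\|_p$, $f:V\to\mathbb R^d$, where $\|v\|_p=(\sum_i|v_i|^p)^{1/p}$. A set $S$ of queries is shattered if for every labeling of $S$ there is a distance in the class satisfying all labeled queries; the VC dimension is the maximum size of a shattered set. *)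

theory Defs
  imports Complex_Main
begin

definition lp_dist :: "real \<Rightarrow> nat \<Rightarrow> ('a \<Rightarrow> nat \<Rightarrow> real) \<Rightarrow> 'a \<Rightarrow> 'a \<Rightarrow> real" where
  "lp_dist p d f x y = (\<Sum>i<d. \<bar>f x i - f y i\<bar> powr p) powr (1 / p)"

text \<open>A labeling of a query (x,y,z) is a boolean: True means (x, y+, z-),
  i.e. rho(x,y) < rho(x,z); False means (x, z+, y-), i.e. rho(x,y) > rho(x,z).\<close>
definition satisfies_label :: "('a \<Rightarrow> 'a \<Rightarrow> real) \<Rightarrow> 'a \<times> 'a \<times> 'a \<Rightarrow> bool \<Rightarrow> bool" where
  "satisfies_label \<rho> q b = (case q of (x, y, z) \<Rightarrow>
     (if b then \<rho> x y < \<rho> x z else \<rho> x y > \<rho> x z))"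

definition lp_shattered :: "real \<Rightarrow> nat \<Rightarrow> 'a set \<Rightarrow> ('a \<times> 'a \<times> 'a) set \<Rightarrow> bool" where
  "lp_shattered p d V S \<longleftrightarrow> S \<subseteq> V \<times> V \<times> V \<and>
     (\<forall>lab :: 'a \<times> 'a \<times> 'a \<Rightarrow> bool. \<exists>f :: 'a \<Rightarrow> nat \<Rightarrow> real.
        \<forall>q\<in>S. satisfies_label (lp_dist p d f) q (lab q))"

definition lp_vc_dim :: "real \<Rightarrow> nat \<Rightarrow> 'a set \<Rightarrow> nat" where
  "lp_vc_dim p d V = Max {card S | S. lp_shattered p d V S}"

end

theory Submission
  imports Defs
begin

lemma sum_if_one:
  assumes "i < d"
  shows "(\<Sum>l<d. if l = i then E else (1::real)) = real d - 1 + E"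
proof -
  have "(\<Sum>l<d. if l = i then E else (1::real)) = E + (\<Sum>l\<in>{..<d}-{i}. if l = i then E else 1)"
    using assms by (subst sum.remove[of _ i]) auto
  also have "(\<Sum>l\<in>{..<d}-{i}. if l = i then E else (1::real)) = (\<Sum>l\<in>{..<d}-{i}. 1)"
    by (rule sum.cong) auto
  also have "\<dots> = real d - 1" using assms by simp
  finally show ?thesis by simp
qed

lemma construct:
  fixes V :: "'a set"
  assumes fin: "finite V" and pp: "p > 0" and kd: "k \<le> d" and kP: "k + 2*P \<le> card V"
  shows "\<exists>S. lp_shattered p d V S \<and> card S = k*P"
proof -
  define n where "n = card V"
  obtain g where g: "bij_betw g {0..<n} V"
    using ex_bij_betw_nat_finite[OF fin] n_def by blast
  have inj: "inj_on g {0..<n}" using g by (rule bij_betw_imp_inj_on)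
  have gV: "a < n \<Longrightarrow> g a \<in> V" for a using g by (auto dest: bij_betw_apply)
  define T where "T = (\<lambda>(i,j). (g i, g(k+2*j), g(k+2*j+1)))"
  define S where "S = T ` ({..<k} \<times> {..<P})"
  have injT: "inj_on T ({..<k} \<times> {..<P})"
  proof (rule inj_onI)
    fix x y assume x: "x \<in> {..<k} \<times> {..<P}" and y: "y \<in> {..<k} \<times> {..<P}" and e: "T x = T y"
    obtain i j where xi: "x = (i,j)" by (cases x)
    obtain i' j' where yi: "y = (i',j')" by (cases y)
    have "g i = g i'" "g (k+2*j) = g (k+2*j')" using e xi yi T_def by auto
    moreover have "i < n" "i' < n" "k+2*j < n" "k+2*j' < n" using x y xi yi kP n_def by auto
    ultimately have "i = i'" "k+2*j = k+2*j'" using inj by (auto simp: inj_on_eq_iff)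
    then show "x = y" using xi yi by simp
  qed
  have cardS: "card S = k*P" unfolding S_def using card_image[OF injT] by (simp add: card_cartesian_product)
  have SV: "S \<subseteq> V \<times> V \<times> V"
  proof
    fix q assume "q \<in> S"
    then obtain i j where "i < k" "j < P" "q = (g i, g(k+2*j), g(k+2*j+1))" unfolding S_def T_def by auto
    moreover have "i < n" "k+2*j < n" "k+2*j+1 < n" using calculation kP n_def by auto
    ultimately show "q \<in> V \<times> V \<times> V" using gV by auto
  qed
  have shat: "\<exists>f. \<forall>q\<in>S. satisfies_label (lp_dist p d f) q (lab q)" for lab :: "'a \<times> 'a \<times> 'a \<Rightarrow> bool"
  proof -
    define h where "h = inv_into {0..<n} g"
    have hg: "a < n \<Longrightarrow> h (g a) = a" for a unfolding h_def using inj by (simp add: inv_into_f_f)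
    define sg where "sg = (\<lambda>l j. if lab (g l, g(k+2*j), g(k+2*j+1)) then 1 else (-1::real))"
    define f where "f = (\<lambda>v l. if h v < k then (if l = h v then 1 else 0)
        else if even (h v - k) then sg l ((h v - k) div 2) else - sg l ((h v - k) div 2))"
    have "\<forall>q\<in>S. satisfies_label (lp_dist p d f) q (lab q)"
    proof
      fix q assume "q \<in> S"
      then obtain i j where ij: "i < k" "j < P" and q: "q = (g i, g(k+2*j), g(k+2*j+1))" unfolding S_def T_def by auto
      have lt: "i < n" "k+2*j < n" "k+2*j+1 < n" using ij kP n_def by auto
      have fx: "f (g i) l = (if l = i then 1 else 0)" for l using hg[OF lt(1)] ij f_def by simp
      have fy: "f (g (k+2*j)) l = sg l j" for l using hg[OF lt(2)] f_def by simp
      have fz: "f (g (k+2*j+1)) l = - sg l j" for l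
      proof -
        have "(k + 2*j + 1 - k) = 2*j+1" by simp
        then show ?thesis using hg[OF lt(3)] f_def by simp
      qed
      have sgi: "sg i j = (if lab q then 1 else -1)" using q sg_def by simp
      have sg1: "\<bar>sg l j\<bar> = 1" for l using sg_def by simp
      have ty: "\<bar>f (g i) l - f (g (k+2*j)) l\<bar> powr p = (if l = i then (if lab q then 0 else 2 powr p) else 1)" for l
        using sg1[of l] sgi pp by (auto simp: fx fy)
      have tz: "\<bar>f (g i) l - f (g (k+2*j+1)) l\<bar> powr p = (if l = i then (if lab q then 2 powr p else 0) else 1)" for l
        unfolding fx fz using sg1[of l] sgi pp by auto
      have id: "i < d" using ij kd by simp
      have Sy: "(\<Sum>l<d. \<bar>f (g i) l - f (g (k+2*j)) l\<bar> powr p) = real d - 1 + (if lab q then 0 else 2 powr p)"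
        by (simp only: ty sum_if_one[OF id])
      have Sz: "(\<Sum>l<d. \<bar>f (g i) l - f (g (k+2*j+1)) l\<bar> powr p) = real d - 1 + (if lab q then 2 powr p else 0)"
        by (simp only: tz sum_if_one[OF id])
      have d1: "real d - 1 \<ge> 0" using id by simp
      have p2: "(2::real) powr p > 0" by simp
      have ip: "1/p > 0" using pp by simp
      show "satisfies_label (lp_dist p d f) q (lab q)"
      proof (cases "lab q")
        case True
        then show ?thesis unfolding satisfies_label_def lp_dist_def q using Sy Sz d1 p2
          by (simp add: True powr_less_mono2[OF ip])
      next
        case False
        then show ?thesis unfolding satisfies_label_def lp_dist_def q using Sy Sz d1 p2
          by (simp add: False powr_less_mono2[OF ip])
      qed
    qed
    then show ?thesis by blast
  qed
  show ?thesis using SV shat cardS unfolding lp_shattered_def by blast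
qed

lemma vc_ge:
  fixes V :: "'a set"
  assumes fin: "finite V" and "lp_shattered p d V S"
  shows "card S \<le> lp_vc_dim p d V"
proof -
  have "{card S | S. lp_shattered p d V S} \<subseteq> card ` Pow (V \<times> V \<times> V)"
    unfolding lp_shattered_def by auto
  then have "finite {card S | S. lp_shattered p d V S}" using fin by (meson finite_Pow_iff finite_SigmaI finite_imageI finite_subset)
  then show ?thesis unfolding lp_vc_dim_def using assms(2) by (auto intro: Max_ge)
qed

theorem mainTheorem4:
  "\<exists>c::real. c > 0 \<and> (\<exists>N::nat. \<forall>(V::'a set) (p::real) (d::nat).
      finite V \<longrightarrow> card V \<ge> N \<longrightarrow> p > 0 \<longrightarrow> d \<ge> 1 \<longrightarrow>
      real (lp_vc_dim p d V) \<ge> c * min (real (card V) ^ 2) (real (card V) * real d))"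
proof (intro exI conjI allI impI)
  show "(1/64::real) > 0" by simp
  fix V :: "'a set" and p :: real and d :: nat
  assume fin: "finite V" and nN: "12 \<le> card V" and pp: "p > 0" and d1: "1 \<le> d"
  define n where "n = card V"
  define k where "k = min d (n div 2)"
  define P where "P = (n - k) div 2"
  have kd: "k \<le> d" and kP: "k + 2*P \<le> card V" unfolding k_def P_def n_def by auto
  obtain S where S: "lp_shattered p d V S" "card S = k*P" using construct[OF fin pp kd kP] by blast
  have le: "k*P \<le> lp_vc_dim p d V" using vc_ge[OF fin S(1)] S(2) by simp
  have n8: "real n \<ge> 12" using nN n_def by simp
  have Pn: "real P \<ge> real n / 16"
  proof -
    have "n - k \<ge> n - n div 2" unfolding k_def by simp
    then have "4 * P + 3 \<ge> n - n div 2" unfolding P_def by linarith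
    moreover have "2 * (n - n div 2) \<ge> n" by linarith
    ultimately have "8 * P + 6 \<ge> n" by linarith
    then have "8 * real P + 6 \<ge> real n" by linarith
    then show ?thesis using n8 by linarith
  qed
  have bound: "real (k*P) \<ge> 1/64 * min (real n ^ 2) (real n * real d)"
  proof (cases "d \<le> n div 2")
    case True
    then have "k = d" unfolding k_def by simp
    then have "real (k*P) = real d * real P" by simp
    also have "\<dots> \<ge> real d * (real n / 16)" using Pn by (intro mult_left_mono) auto
    finally have "real (k*P) \<ge> real n * real d / 16" by (simp add: algebra_simps)
    moreover have "min (real n ^ 2) (real n * real d) \<le> real n * real d" by simp
    moreover have "real n * real d \<ge> 0" by simp
    ultimately show ?thesis by linarith
  next
    case False
    then have "k = n div 2" unfolding k_def by simp
    then have "2 * k + 1 \<ge> n" by linarith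
    then have kn: "real k \<ge> real n / 4" using n8 by linarith
    have "real (k*P) = real k * real P" by simp
    also have "\<dots> \<ge> (real n / 4) * (real n / 16)" using kn Pn n8
      by (intro mult_mono) auto
    finally have "real (k*P) \<ge> real n ^ 2 / 64" by (simp add: power2_eq_square)
    moreover have "min (real n ^ 2) (real n * real d) \<le> real n ^ 2" by simp
    ultimately show ?thesis by linarith
  qed
  show "1/64 * min (real (card V) ^ 2) (real (card V) * real d) \<le> real (lp_vc_dim p d V)"
    using bound le n_def by (metis of_nat_le_iff order_trans)
qed

end
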